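(* Let $0<\alpha<1$ and $p,q>0$. If $G_{\alpha,p}(A,B)\le_\lambda\mathcal{A}_{\alpha,q}(A,B)$ holds for all positive definite $2\times2$ matrices $A,B$, then $p\le q$.
   Context: For positive definite $A,B$: $A\#_\alpha B:=A^{1/2}(A^{-1/2}BA^{-1/2})^\alpha A^{1/2}$, $G_{\alpha,p}(A,B):=(A^p\#_\alpha B^p)^{1/p}$, $\mathcal{A}_{\alpha,q}(A,B):=((1-\alpha)A^q+\alpha B^q)^{1/q}$. For positive semidefinite $n\times n$ matrices $X,Y$ with eigenvalues listed in decreasing order with multiplicities $\lambda_1(\cdot)\ge\dots\ge\lambda_n(\cdot)$, $X\le_\lambda Y$ means $\lambda_i(X)\le\lambda_i(Y)$ for all $i$. *)

theory Defs
  imports "Jordan_Normal_Form.Char_Poly"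
begin

definition cadj :: "complex mat \<Rightarrow> complex mat" where
  "cadj A = mat (dim_col A) (dim_row A) (\<lambda>(i,j). cnj (A $$ (j,i)))"

definition hermitian :: "nat \<Rightarrow> complex mat \<Rightarrow> bool" where
  "hermitian n A \<longleftrightarrow> A \<in> carrier_mat n n \<and> cadj A = A"

definition posdef :: "nat \<Rightarrow> complex mat \<Rightarrow> bool" where
  "posdef n A \<longleftrightarrow> hermitian n A \<and>
     (\<forall>v \<in> carrier_vec n. v \<noteq> 0\<^sub>v n \<longrightarrow> 0 < Re (map_vec cnj v \<bullet> (A *\<^sub>v v)))"

definition unitary :: "nat \<Rightarrow> complex mat \<Rightarrow> bool" where
  "unitary n U \<longleftrightarrow> U \<in> carrier_mat n n \<and> U * cadj U = 1\<^sub>m n"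

definition rdiag :: "nat \<Rightarrow> (nat \<Rightarrow> real) \<Rightarrow> complex mat" where
  "rdiag n d = mat n n (\<lambda>(i,j). if i = j then complex_of_real (d i) else 0)"

definition mpow :: "nat \<Rightarrow> complex mat \<Rightarrow> real \<Rightarrow> complex mat" where
  "mpow n A t = (SOME B. \<exists>U d. unitary n U \<and> (\<forall>i<n. 0 < d i) \<and>
       A = U * rdiag n d * cadj U \<and> B = U * rdiag n (\<lambda>i. d i powr t) * cadj U)"

definition gmean :: "nat \<Rightarrow> real \<Rightarrow> complex mat \<Rightarrow> complex mat \<Rightarrow> complex mat" where
  "gmean n \<alpha> A B = mpow n A (1/2) * mpow n (mpow n A (-1/2) * B * mpow n A (-1/2)) \<alpha> * mpow n A (1/2)"

definition G_ap :: "nat \<Rightarrow> real \<Rightarrow> real \<Rightarrow> complex mat \<Rightarrow> complex mat \<Rightarrow> complex mat" where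
  "G_ap n \<alpha> p A B = mpow n (gmean n \<alpha> (mpow n A p) (mpow n B p)) (1/p)"

definition A_aq :: "nat \<Rightarrow> real \<Rightarrow> real \<Rightarrow> complex mat \<Rightarrow> complex mat \<Rightarrow> complex mat" where
  "A_aq n \<alpha> q A B = mpow n (complex_of_real (1 - \<alpha>) \<cdot>\<^sub>m mpow n A q + complex_of_real \<alpha> \<cdot>\<^sub>m mpow n B q) (1/q)"

definition eigs :: "nat \<Rightarrow> complex mat \<Rightarrow> real list" where
  "eigs n X = (SOME ls. length ls = n \<and> sorted_wrt (\<ge>) ls \<and>
      char_poly X = (\<Prod>a\<leftarrow>ls. [:- complex_of_real a, 1:]))"

definition eig_le :: "nat \<Rightarrow> complex mat \<Rightarrow> complex mat \<Rightarrow> bool" where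
  "eig_le n X Y \<longleftrightarrow> (\<forall>i<n. eigs n X ! i \<le> eigs n Y ! i)"

end

theory Submission
  imports Defs "HOL-Real_Asymp.Real_Asymp"
begin
lemma det2: assumes A: "A \<in> carrier_mat 2 2" shows "det A = A$$(0,0) * A$$(1,1) - A$$(0,1) * A$$(1,0)"
proof -
  have c: "mat_delete A 0 j \<in> carrier_mat 1 1" for j using A unfolding mat_delete_def by auto
  show ?thesis
  apply (subst laplace_expansion_row[of A 2 0], simp add: A, simp)
  using A apply (simp add: cofactor_def numeral_2_eq_2 lessThan_Suc det_single[OF c])
  apply (simp add: mat_delete_def insert_index_def)
  done
qed

definition m2 :: "complex \<Rightarrow> complex \<Rightarrow> complex \<Rightarrow> complex \<Rightarrow> complex mat" where
  "m2 a b c d = mat 2 2 (\<lambda>(i,j). if i = 0 then (if j = 0 then a else b) else (if j = 0 then c else d))"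

lemma m2_carrier[simp]: "m2 a b c d \<in> carrier_mat 2 2" and m2_dim[simp]: "dim_row (m2 a b c d) = 2" "dim_col (m2 a b c d) = 2"
  by (auto simp: m2_def)

lemma m2_idx[simp]: "m2 a b c d $$ (0,0) = a" "m2 a b c d $$ (0,1) = b" "m2 a b c d $$ (1,0) = c" "m2 a b c d $$ (1,1) = d"
  "m2 a b c d $$ (0,Suc 0) = b" "m2 a b c d $$ (Suc 0,0) = c" "m2 a b c d $$ (Suc 0,Suc 0) = d"
  by (auto simp: m2_def)

lemma less2: "(i::nat) < 2 \<longleftrightarrow> i = 0 \<or> i = 1" by auto

lemma m2_eta: assumes "A \<in> carrier_mat 2 2" shows "A = m2 (A$$(0,0)) (A$$(0,1)) (A$$(1,0)) (A$$(1,1))"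
  by (rule eq_matI) (use assms in \<open>auto simp: m2_def less2\<close>)

lemma m2_eq_iff: "m2 a b c d = m2 a' b' c' d' \<longleftrightarrow> a = a' \<and> b = b' \<and> c = c' \<and> d = d'"
  by (metis m2_idx)

lemma m2_mult[simp]: "m2 a b c d * m2 e f g h = m2 (a*e+b*g) (a*f+b*h) (c*e+d*g) (c*f+d*h)"
  by (rule eq_matI) (auto simp: m2_def less2 scalar_prod_def numeral_2_eq_2 col_def row_def)

lemma m2_add[simp]: "m2 a b c d + m2 e f g h = m2 (a+e) (b+f) (c+g) (d+h)"
  by (rule eq_matI) (auto simp: m2_def less2)

lemma m2_smult[simp]: "x \<cdot>\<^sub>m m2 a b c d = m2 (x*a) (x*b) (x*c) (x*d)"
  by (rule eq_matI) (auto simp: m2_def less2)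

lemma m2_one: "1\<^sub>m 2 = m2 1 0 0 1"
  by (rule eq_matI) (auto simp: m2_def less2)

lemma m2_cadj[simp]: "cadj (m2 a b c d) = m2 (cnj a) (cnj c) (cnj b) (cnj d)"
  unfolding cadj_def by (rule eq_matI) (auto simp: m2_def less2)

lemma m2_rdiag: "rdiag 2 d = m2 (d 0) 0 0 (d 1)"
  unfolding rdiag_def by (rule eq_matI) (auto simp: m2_def less2)

lemma m2_det[simp]: "det (m2 a b c d) = a * d - b * c"
  by (simp add: det2)

lemma m2_char_poly: "char_poly (m2 a b c d) = [:a*d - b*c, -(a+d), 1:]"
  unfolding char_poly_def
  apply (subst det2)
   apply (simp add: char_poly_matrix_def)
  apply (simp add: char_poly_matrix_def m2_def)
  done

lemma unitary_m2:
  assumes "unitary 2 U"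
  obtains a b c e where "U = m2 a b c e"
    "a * cnj a + b * cnj b = 1" "a * cnj c + b * cnj e = 0" "c * cnj a + e * cnj b = 0" "c * cnj c + e * cnj e = 1"
    "cnj a * a + cnj c * c = 1" "cnj a * b + cnj c * e = 0" "cnj b * a + cnj e * c = 0" "cnj b * b + cnj e * e = 1"
    "(a * e - b * c) * (cnj a * cnj e - cnj b * cnj c) = 1"
proof -
  have U: "U \<in> carrier_mat 2 2" and UU: "U * cadj U = 1\<^sub>m 2" using assms by (auto simp: unitary_def)
  have cU: "cadj U \<in> carrier_mat 2 2" using U by (auto simp: cadj_def)
  have UU2: "cadj U * U = 1\<^sub>m 2" by (rule mat_mult_left_right_inverse[OF U cU UU])
  define a b c e where "a = U$$(0,0)" "b = U$$(0,1)" "c = U$$(1,0)" "e = U$$(1,1)"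
  have Ue: "U = m2 a b c e" unfolding a_b_c_e_def by (rule m2_eta[OF U])
  have d: "det U * det (cadj U) = 1" using UU det_mult[OF U cU] by simp
  show ?thesis
    apply (rule that[OF Ue])
    using UU UU2 d unfolding Ue by (simp_all add: m2_one m2_eq_iff algebra_simps)
qed

lemma conj_diag_trdet:
  assumes "unitary 2 U" "M = U * rdiag 2 d * cadj U"
  shows "M$$(0,0) + M$$(1,1) = complex_of_real (d 0 + d 1)" "det M = complex_of_real (d 0 * d 1)"
proof -
  obtain a b c e where U: "U = m2 a b c e"
    and h: "a * cnj a + b * cnj b = 1" "a * cnj c + b * cnj e = 0" "c * cnj a + e * cnj b = 0" "c * cnj c + e * cnj e = 1"
    "cnj a * a + cnj c * c = 1" "cnj a * b + cnj c * e = 0" "cnj b * a + cnj e * c = 0" "cnj b * b + cnj e * e = 1"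
    "(a * e - b * c) * (cnj a * cnj e - cnj b * cnj c) = 1"
    using unitary_m2[OF assms(1)] by metis
  let ?x = "complex_of_real (d 0)" and ?y = "complex_of_real (d 1)"
  have "M$$(0,0) + M$$(1,1) = ?x * (cnj a * a + cnj c * c) + ?y * (cnj b * b + cnj e * e)"
    unfolding assms(2) U m2_rdiag by (simp add: algebra_simps)
  then show "M$$(0,0) + M$$(1,1) = complex_of_real (d 0 + d 1)" using h by simp
  have "det M = ?x * ?y * ((a * e - b * c) * (cnj a * cnj e - cnj b * cnj c))"
    unfolding assms(2) U m2_rdiag by (simp add: algebra_simps)
  then show "det M = complex_of_real (d 0 * d 1)" using h by simp
qed

lemma conj_diag_interp:
  assumes "unitary 2 U" "\<And>i. i < 2 \<Longrightarrow> f i = \<beta> * d i + \<gamma>"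
  shows "U * rdiag 2 f * cadj U = complex_of_real \<beta> \<cdot>\<^sub>m (U * rdiag 2 d * cadj U) + complex_of_real \<gamma> \<cdot>\<^sub>m 1\<^sub>m 2"
proof -
  obtain a b c e where U: "U = m2 a b c e"
    and h: "a * cnj a + b * cnj b = 1" "a * cnj c + b * cnj e = 0" "c * cnj a + e * cnj b = 0" "c * cnj c + e * cnj e = 1"
    using unitary_m2[OF assms(1)] by metis
  have f: "f 0 = \<beta> * d 0 + \<gamma>" "f 1 = \<beta> * d 1 + \<gamma>" using assms(2) by auto
  have h': "a * cnj a = 1 - b * cnj b" "a * cnj c = - (b * cnj e)" "c * cnj a = - (e * cnj b)" "c * cnj c = 1 - e * cnj e"
    using h by (auto simp: algebra_simps eq_neg_iff_add_eq_0)
  let ?g = "complex_of_real \<gamma>"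
  have g1: "a * (cnj a * ?g) + b * (cnj b * ?g) = ?g"
  proof - have "(a * cnj a + b * cnj b) * ?g = ?g" using h by simp thus ?thesis by (simp add: algebra_simps) qed
  have g2: "a * (cnj c * ?g) + b * (cnj e * ?g) = 0"
  proof - have "(a * cnj c + b * cnj e) * ?g = 0" using h by simp thus ?thesis by (simp add: algebra_simps) qed
  have g3: "c * (cnj a * ?g) + e * (cnj b * ?g) = 0"
  proof - have "(c * cnj a + e * cnj b) * ?g = 0" using h by simp thus ?thesis by (simp add: algebra_simps) qed
  have g4: "c * (cnj c * ?g) + e * (cnj e * ?g) = ?g"
  proof - have "(c * cnj c + e * cnj e) * ?g = ?g" using h by simp thus ?thesis by (simp add: algebra_simps) qed
  show ?thesis
    unfolding U m2_rdiag m2_one using f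
    by (simp add: m2_eq_iff algebra_simps g1 g2 g3 g4)
qed

lemma interp_exists: "\<exists>\<beta> \<gamma>. F u = \<beta> * u + \<gamma> \<and> F v = \<beta> * v + \<gamma>" for F :: "real \<Rightarrow> real"
proof (cases "u = v")
  case True then show ?thesis by (intro exI[of _ 0] exI[of _ "F u"]) simp
next
  case False
  define \<beta> where "\<beta> = (F u - F v) / (u - v)"
  have "\<beta> * (u - v) = F u - F v" using False unfolding \<beta>_def by simp
  then have "F v = \<beta> * v + (F u - \<beta> * u)" by (simp add: algebra_simps)
  then show ?thesis by (intro exI[of _ \<beta>] exI[of _ "F u - \<beta> * u"]) simp
qed

lemma mpow_eq:
  assumes U: "unitary 2 U" and d: "\<And>i. i < 2 \<Longrightarrow> 0 < d i" and M: "M = U * rdiag 2 d * cadj U"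
  shows "mpow 2 M t = U * rdiag 2 (\<lambda>i. d i powr t) * cadj U"
proof -
  let ?P = "\<lambda>B. \<exists>U d. unitary 2 U \<and> (\<forall>i<2. 0 < d i) \<and> M = U * rdiag 2 d * cadj U \<and> B = U * rdiag 2 (\<lambda>i. d i powr t) * cadj U"
  have ex: "\<exists>B. ?P B" using U d M by blast
  have "?P (mpow 2 M t)" unfolding mpow_def by (rule someI_ex[OF ex])
  then obtain V e where V: "unitary 2 V" and e: "\<forall>i<2. 0 < e i" and Me: "M = V * rdiag 2 e * cadj V"
    and B: "mpow 2 M t = V * rdiag 2 (\<lambda>i. e i powr t) * cadj V" by blast
  have t1: "complex_of_real (d 0 + d 1) = complex_of_real (e 0 + e 1)"
    using conj_diag_trdet(1)[OF U M] conj_diag_trdet(1)[OF V Me] by simp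
  have t2: "complex_of_real (d 0 * d 1) = complex_of_real (e 0 * e 1)"
    using conj_diag_trdet(2)[OF U M] conj_diag_trdet(2)[OF V Me] by simp
  have s1: "d 0 + d 1 = e 0 + e 1" and s2: "d 0 * d 1 = e 0 * e 1" using t1 t2 of_real_eq_iff by blast+
  obtain \<beta> \<gamma> where bg: "d 0 powr t = \<beta> * d 0 + \<gamma>" "d 1 powr t = \<beta> * d 1 + \<gamma>"
    using interp_exists[of "\<lambda>x. x powr t" "d 0" "d 1"] by blast
  have ein: "e i = d 0 \<or> e i = d 1" if "i < 2" for i
  proof -
    have "e i * e i - (d 0 + d 1) * e i + d 0 * d 1 = 0"
      using that unfolding s1 s2 by (auto simp: less2 algebra_simps)
    then have "(e i - d 0) * (e i - d 1) = 0" by (simp add: algebra_simps)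
    then show ?thesis by auto
  qed
  have fd: "\<And>i. i < 2 \<Longrightarrow> d i powr t = \<beta> * d i + \<gamma>" using bg by (auto simp: less2)
  have fe: "\<And>i. i < 2 \<Longrightarrow> e i powr t = \<beta> * e i + \<gamma>" using bg ein by fastforce
  show ?thesis
    using conj_diag_interp[of V "\<lambda>i. e i powr t" \<beta> e \<gamma>, OF V fe] conj_diag_interp[of U "\<lambda>i. d i powr t" \<beta> d \<gamma>, OF U fd] 
      B Me M by simp
qed

lemma eigs2:
  assumes X: "X \<in> carrier_mat 2 2" and l: "l2 \<le> l1"
    and tr: "X$$(0,0) + X$$(1,1) = complex_of_real (l1 + l2)" and dt: "det X = complex_of_real (l1 * l2)"
  shows "eigs 2 X = [l1, l2]"
proof -
  obtain a b c e where Xe: "X = m2 a b c e" using m2_eta[OF X] by blast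
  have cp: "char_poly X = [:complex_of_real (l1 * l2), - complex_of_real (l1 + l2), 1:]"
    using tr dt unfolding Xe m2_char_poly by simp
  have pl: "(\<Prod>a\<leftarrow>[x,y]. [:- complex_of_real a, 1:]) = [:complex_of_real (x * y), - complex_of_real (x + y), 1:]" for x y
    by (simp add: mult_pCons_left smult_add_left algebra_simps del: pCons_0_as_mult)
  let ?Q = "\<lambda>ls. length ls = 2 \<and> sorted_wrt (\<ge>) ls \<and> char_poly X = (\<Prod>a\<leftarrow>ls. [:- complex_of_real a, 1:])"
  have q: "?Q [l1, l2]" using l cp pl by simp
  have uniq: "ls = [l1, l2]" if "?Q ls" for ls
  proof -
    have "\<exists>x y. ls = [x, y]" using that by (auto simp: numeral_2_eq_2 length_Suc_conv)
    then obtain x y where ls: "ls = [x, y]" by blast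
    have xy: "y \<le> x" using that ls by simp
    have "[:complex_of_real (x * y), - complex_of_real (x + y), 1:] = [:complex_of_real (l1 * l2), - complex_of_real (l1 + l2), 1:]"
      using that ls cp pl by simp
    then have "complex_of_real (x * y) = complex_of_real (l1 * l2)" "complex_of_real (x + y) = complex_of_real (l1 + l2)"
      by (simp_all only: pCons_eq_iff neg_equal_iff_equal)
    then have e1: "x * y = l1 * l2" and e2: "x + y = l1 + l2" using of_real_eq_iff by blast+
    have "x * x - (l1 + l2) * x + l1 * l2 = 0" unfolding e1[symmetric] e2[symmetric] by (simp add: algebra_simps)
    then have "(x - l1) * (x - l2) = 0" by (simp add: algebra_simps)
    then have "x = l1 \<or> x = l2" by auto
    then have "x = l1 \<and> y = l2" using e2 xy l by auto
    then show ?thesis using ls by simp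
  qed
  show ?thesis unfolding eigs_def using q uniq by (rule some_equality)
qed

definition sym2 :: "real \<Rightarrow> real \<Rightarrow> real \<Rightarrow> complex mat" where
  "sym2 a b c = m2 (of_real a) (of_real b) (of_real b) (of_real c)"
definition rot :: "real \<Rightarrow> real \<Rightarrow> complex mat" where
  "rot x y = m2 (of_real x) (of_real (-y)) (of_real y) (of_real x)"
definition dg :: "real \<Rightarrow> real \<Rightarrow> nat \<Rightarrow> real" where
  "dg u v = (\<lambda>i. if i = 0 then u else v)"

lemma dg_simps[simp]: "dg u v 0 = u" "dg u v (Suc 0) = v" "dg u v 1 = v" by (auto simp: dg_def)

lemma sym2_carrier[simp]: "sym2 a b c \<in> carrier_mat 2 2" by (simp add: sym2_def)

lemma rot_unitary: assumes "x^2 + y^2 = 1" shows "unitary 2 (rot x y)"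
proof -
  have "complex_of_real x * complex_of_real x + complex_of_real y * complex_of_real y = 1"
    using assms by (metis of_real_1 of_real_add of_real_mult power2_eq_square)
  then show ?thesis unfolding unitary_def rot_def by (simp add: m2_one m2_eq_iff algebra_simps)
qed

lemma rot_conj: "rot x y * rdiag 2 (dg u v) * cadj (rot x y) = sym2 (x^2 * u + y^2 * v) (x * y * (u - v)) (y^2 * u + x^2 * v)"
  unfolding rot_def sym2_def m2_rdiag by (simp add: m2_eq_iff algebra_simps power2_eq_square)

lemma sym2_scale_add: "complex_of_real s \<cdot>\<^sub>m sym2 a b c + complex_of_real t \<cdot>\<^sub>m sym2 a' b' c' = sym2 (s*a + t*a') (s*b+t*b') (s*c+t*c')"
  unfolding sym2_def by simp

lemma sym2_scale_one: "complex_of_real s \<cdot>\<^sub>m sym2 a b c + complex_of_real t \<cdot>\<^sub>m 1\<^sub>m 2 = sym2 (s*a + t) (s*b) (s*c+t)"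
  unfolding sym2_def m2_one by simp

lemma sym2_mult_diag: "sym2 u 0 v * sym2 a b c * sym2 u 0 v = sym2 (u*u*a) (u*v*b) (v*v*c)"
  unfolding sym2_def by (simp add: algebra_simps)

lemma sym2_diag: "sym2 u 0 v = rot 1 0 * rdiag 2 (dg u v) * cadj (rot 1 0)"
  unfolding rot_conj by simp

definition ev1 :: "real \<Rightarrow> real \<Rightarrow> real \<Rightarrow> real" where
  "ev1 a b c = (a + c) / 2 + sqrt (((a - c) / 2)^2 + b^2)"
definition ev2 :: "real \<Rightarrow> real \<Rightarrow> real \<Rightarrow> real" where
  "ev2 a b c = (a + c) / 2 - sqrt (((a - c) / 2)^2 + b^2)"

lemma ev_props:
  assumes "0 < a" "b^2 < a * c"
  shows "ev2 a b c \<le> ev1 a b c" "0 < ev2 a b c" "ev1 a b c + ev2 a b c = a + c" "ev1 a b c * ev2 a b c = a * c - b^2"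
    "(ev1 a b c - a) * (ev1 a b c - c) = b^2"
proof -
  define r where "r = sqrt (((a - c) / 2)^2 + b^2)"
  have r0: "0 \<le> r" unfolding r_def by simp
  have r2: "r^2 = ((a - c) / 2)^2 + b^2" unfolding r_def by simp
  have e1: "ev1 a b c = (a+c)/2 + r" and e2: "ev2 a b c = (a+c)/2 - r" unfolding r_def ev1_def ev2_def by simp_all
  show "ev2 a b c \<le> ev1 a b c" using r0 e1 e2 by simp
  show s: "ev1 a b c + ev2 a b c = a + c" using e1 e2 by simp
  have "ev1 a b c * ev2 a b c = ((a+c)/2)^2 - r^2" unfolding e1 e2 by (simp only: power2_eq_square square_diff_square_factored)
  also have "\<dots> = a * c - b^2" unfolding r2 by (simp add: power2_eq_square field_simps)
  finally show p: "ev1 a b c * ev2 a b c = a * c - b^2" .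
  have "(ev1 a b c - a) * (ev1 a b c - c) = r^2 - ((a-c)/2)^2" unfolding e1 by (simp add: power2_eq_square field_simps)
  then show "(ev1 a b c - a) * (ev1 a b c - c) = b^2" unfolding r2 by simp
  have "0 < a * c" using assms(2) by (meson le_less_trans zero_le_power2)
  then have c0: "0 < c" using assms(1) by (simp add: zero_less_mult_iff)
  have "0 < ev1 a b c * ev2 a b c" using p assms by simp
  moreover have "0 < ev1 a b c + ev2 a b c" using s assms c0 by simp
  ultimately show "0 < ev2 a b c" by (metis add_neg_neg not_less_iff_gr_or_eq zero_less_mult_iff)
qed

lemma spectral_sym2:
  assumes "0 < a" "b^2 < a * c"
  shows "\<exists>x y. x^2 + y^2 = 1 \<and> sym2 a b c = rot x y * rdiag 2 (dg (ev1 a b c) (ev2 a b c)) * cadj (rot x y)"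
proof -
  let ?l = "ev1 a b c" and ?m = "ev2 a b c"
  note ev = ev_props[OF assms]
  show ?thesis
  proof (cases "b = 0")
    case True
    have sq: "sqrt (((a - c) / 2)^2) = \<bar>a - c\<bar> / 2" by (simp add: real_sqrt_abs)
    show ?thesis
    proof (cases "c \<le> a")
      case True
      then have "?l = a" "?m = c" using \<open>b = 0\<close> sq by (simp_all add: ev1_def ev2_def field_simps)
      then show ?thesis using \<open>b = 0\<close> by (intro exI[of _ 1] exI[of _ 0]) (simp add: rot_conj)
    next
      case False
      then have "?l = c" "?m = a" using \<open>b = 0\<close> sq by (simp_all add: ev1_def ev2_def field_simps)
      then show ?thesis using \<open>b = 0\<close> by (intro exI[of _ 0] exI[of _ 1]) (simp add: rot_conj)
    qed
  next
    case False
    define w where "w = ?l - a"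
    define n where "n = sqrt (b^2 + w^2)"
    have bw: "w * (?l - c) = b^2" using ev(5) unfolding w_def by simp
    have n2: "n^2 = b^2 + w^2" unfolding n_def by simp
    have "0 < b^2" using False by simp
    then have nn: "0 < b^2 + w^2" by (simp add: add_pos_nonneg)
    then have npos: "0 < n" unfolding n_def by simp
    have mm: "?m = a + c - ?l" using ev(3) by simp
    have "(b/n)^2 + (w/n)^2 = (b^2 + w^2)/n^2" by (simp add: power_divide add_divide_distrib)
    then have x2y2: "(b/n)^2 + (w/n)^2 = 1" using n2 nn False by simp
    have E1: "(b/n)^2 * ?l + (w/n)^2 * ?m = a"
    proof -
      have "b^2 * ?l + w^2 * ?m - a * (b^2 + w^2) = w * (b^2 - w * (?l - c))"
        unfolding mm w_def by (simp add: algebra_simps power2_eq_square)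
      then have "b^2 * ?l + w^2 * ?m = a * (b^2 + w^2)" using bw by simp
      moreover have "(b/n)^2 * ?l + (w/n)^2 * ?m = (b^2 * ?l + w^2 * ?m) / n^2"
        by (simp add: power_divide add_divide_distrib)
      ultimately show ?thesis using n2 nn False by simp
    qed
    have E2: "(b/n) * (w/n) * (?l - ?m) = b"
    proof -
      have "w * (?l - ?m) = b^2 + w^2"
        unfolding mm using bw unfolding w_def by (simp add: algebra_simps power2_eq_square)
      then have "b * w * (?l - ?m) = b * n^2" using n2 by (simp add: algebra_simps)
      then show ?thesis using npos by (simp add: field_simps power2_eq_square)
    qed
    have E3: "(w/n)^2 * ?l + (b/n)^2 * ?m = c"
    proof -
      have "((b/n)^2 + (w/n)^2) * (?l + ?m) = a + c" using x2y2 ev(3) by simp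
      then show ?thesis using E1 by (simp add: algebra_simps)
    qed
    show ?thesis
      by (intro exI[of _ "b/n"] exI[of _ "w/n"]) (simp only: x2y2 rot_conj E1 E2 E3)
  qed
qed

lemma dg_pos: "0 < u \<Longrightarrow> 0 < v \<Longrightarrow> i < 2 \<Longrightarrow> 0 < dg u v i" by (auto simp: dg_def)

lemma sym2_mpow:
  assumes "0 < a" "b^2 < a * c"
  shows "\<exists>x y. x^2 + y^2 = 1 \<and> mpow 2 (sym2 a b c) t = rot x y * rdiag 2 (\<lambda>i. dg (ev1 a b c) (ev2 a b c) i powr t) * cadj (rot x y)"
proof -
  note ev = ev_props[OF assms]
  obtain x y where xy: "x^2 + y^2 = 1" and S: "sym2 a b c = rot x y * rdiag 2 (dg (ev1 a b c) (ev2 a b c)) * cadj (rot x y)"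
    using spectral_sym2[OF assms] by blast
  have pos: "\<And>i. i < 2 \<Longrightarrow> 0 < dg (ev1 a b c) (ev2 a b c) i" using ev by (intro dg_pos) auto
  show ?thesis using mpow_eq[OF rot_unitary[OF xy] pos S] xy by blast
qed

lemma sym2_mpow_interp:
  assumes "0 < a" "b^2 < a * c"
  shows "\<exists>\<beta> \<gamma>. mpow 2 (sym2 a b c) t = sym2 (\<beta> * a + \<gamma>) (\<beta> * b) (\<beta> * c + \<gamma>) \<and>
     ev1 a b c powr t = \<beta> * ev1 a b c + \<gamma> \<and> ev2 a b c powr t = \<beta> * ev2 a b c + \<gamma>"
proof -
  note ev = ev_props[OF assms]
  obtain x y where xy: "x^2 + y^2 = 1" and S: "sym2 a b c = rot x y * rdiag 2 (dg (ev1 a b c) (ev2 a b c)) * cadj (rot x y)"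
    using spectral_sym2[OF assms] by blast
  have pos: "\<And>i. i < 2 \<Longrightarrow> 0 < dg (ev1 a b c) (ev2 a b c) i" using ev by (intro dg_pos) auto
  obtain \<beta> \<gamma> where bg: "ev1 a b c powr t = \<beta> * ev1 a b c + \<gamma>" "ev2 a b c powr t = \<beta> * ev2 a b c + \<gamma>"
    using interp_exists[of "\<lambda>x. x powr t" "ev1 a b c" "ev2 a b c"] by blast
  have f: "\<And>i. i < 2 \<Longrightarrow> dg (ev1 a b c) (ev2 a b c) i powr t = \<beta> * dg (ev1 a b c) (ev2 a b c) i + \<gamma>"
    using bg by (auto simp: less2)
  have m: "mpow 2 (sym2 a b c) t = rot x y * rdiag 2 (\<lambda>i. dg (ev1 a b c) (ev2 a b c) i powr t) * cadj (rot x y)"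
    by (rule mpow_eq[OF rot_unitary[OF xy] pos S])
  have "mpow 2 (sym2 a b c) t = complex_of_real \<beta> \<cdot>\<^sub>m sym2 a b c + complex_of_real \<gamma> \<cdot>\<^sub>m 1\<^sub>m 2"
    unfolding m
    using conj_diag_interp[of "rot x y" "\<lambda>i. dg (ev1 a b c) (ev2 a b c) i powr t" \<beta> "dg (ev1 a b c) (ev2 a b c)" \<gamma>, OF rot_unitary[OF xy] f]
    by (simp add: S[symmetric])
  then show ?thesis using bg unfolding sym2_scale_one by (auto simp: algebra_simps)
qed

lemma sym2_eigs_pow:
  assumes "0 < a" "b^2 < a * c" "0 < t"
  shows "eigs 2 (mpow 2 (sym2 a b c) t) = [ev1 a b c powr t, ev2 a b c powr t]"
proof -
  note ev = ev_props[OF assms(1,2)]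
  obtain x y where xy: "x^2 + y^2 = 1" and S: "mpow 2 (sym2 a b c) t = rot x y * rdiag 2 (\<lambda>i. dg (ev1 a b c) (ev2 a b c) i powr t) * cadj (rot x y)"
    using sym2_mpow[OF assms(1,2)] by blast
  note td = conj_diag_trdet[OF rot_unitary[OF xy] S]
  have car: "mpow 2 (sym2 a b c) t \<in> carrier_mat 2 2" unfolding S rot_def by (simp add: m2_rdiag)
  have le: "ev2 a b c powr t \<le> ev1 a b c powr t" using ev assms(3) by (simp add: powr_mono2)
  show ?thesis by (rule eigs2[OF car le]) (use td in simp_all)
qed

lemma posdef_sym2:
  assumes a: "0 < a" and d: "b^2 < a * c"
  shows "posdef 2 (sym2 a b c)"
  unfolding posdef_def
proof (intro conjI ballI impI)
  show "hermitian 2 (sym2 a b c)" unfolding hermitian_def sym2_def by simp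
  fix v :: "complex vec" assume v: "v \<in> carrier_vec 2" "v \<noteq> 0\<^sub>v 2"
  define x where "x = v $ 0" define y where "y = v $ 1"
  have ne: "x \<noteq> 0 \<or> y \<noteq> 0"
  proof (rule ccontr)
    assume "\<not> (x \<noteq> 0 \<or> y \<noteq> 0)"
    then have "v = 0\<^sub>v 2" using v(1) unfolding x_def y_def by (intro eq_vecI) (auto simp: less2)
    then show False using v(2) by simp
  qed
  have eq: "Re (map_vec cnj v \<bullet> (sym2 a b c *\<^sub>v v)) =
     a * ((Re x)^2 + (Im x)^2) + 2 * b * (Re x * Re y + Im x * Im y) + c * ((Re y)^2 + (Im y)^2)"
    using v(1) unfolding x_def y_def sym2_def
    by (simp add: scalar_prod_def mult_mat_vec_def numeral_2_eq_2 row_def m2_def power2_eq_square algebra_simps)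
  define Q where "Q = a * ((Re x)^2 + (Im x)^2) + 2 * b * (Re x * Re y + Im x * Im y) + c * ((Re y)^2 + (Im y)^2)"
  have aQ: "a * Q = (a * Re x + b * Re y)^2 + (a * Im x + b * Im y)^2 + (a * c - b^2) * ((Re y)^2 + (Im y)^2)"
    unfolding Q_def by (simp add: algebra_simps power2_eq_square)
  have "0 < a * Q"
  proof (cases "y = 0")
    case True
    then have "x \<noteq> 0" using ne by simp
    then have "0 < (Re x)^2 + (Im x)^2" using complex_eq_iff[of x 0] by (auto simp: add_pos_nonneg add_nonneg_pos)
    then have "0 < a^2 * ((Re x)^2 + (Im x)^2)" using a by simp
    moreover have "(a * Re x)^2 + (a * Im x)^2 = a^2 * ((Re x)^2 + (Im x)^2)" by (simp add: power_mult_distrib algebra_simps)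
    ultimately show ?thesis unfolding aQ using True by simp
  next
    case False
    then have "0 < (Re y)^2 + (Im y)^2" using complex_eq_iff[of y 0] by (auto simp: add_pos_nonneg add_nonneg_pos)
    then have "0 < (a * c - b^2) * ((Re y)^2 + (Im y)^2)" using d by simp
    then show ?thesis unfolding aQ by (simp add: add_nonneg_pos)
  qed
  then have "0 < Q" using a by (simp add: zero_less_mult_iff)
  then show "0 < Re (map_vec cnj v \<bullet> (sym2 a b c *\<^sub>v v))" unfolding eq Q_def .
qed

lemma dg_powr: "(\<lambda>i. dg u v i powr t) = dg (u powr t) (v powr t)"
  by (auto simp: dg_def)

lemma mpow_rotconj:
  assumes "x^2 + y^2 = 1" "0 < u" "0 < v"
  shows "mpow 2 (rot x y * rdiag 2 (dg u v) * cadj (rot x y)) t =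
     sym2 (x^2 * u powr t + y^2 * v powr t) (x * y * (u powr t - v powr t)) (y^2 * u powr t + x^2 * v powr t)"
proof -
  have pos: "\<And>i. i < 2 \<Longrightarrow> 0 < dg u v i" using assms by (intro dg_pos) auto
  have "mpow 2 (rot x y * rdiag 2 (dg u v) * cadj (rot x y)) t = rot x y * rdiag 2 (\<lambda>i. dg u v i powr t) * cadj (rot x y)"
    by (rule mpow_eq[of "rot x y" "dg u v", OF rot_unitary[OF assms(1)] pos refl])
  then show ?thesis unfolding dg_powr rot_conj .
qed

lemma mpow_diag:
  assumes "0 < u" "0 < v"
  shows "mpow 2 (sym2 u 0 v) t = sym2 (u powr t) 0 (v powr t)"
  apply (subst sym2_diag)
  using mpow_rotconj[of 1 0 u v t] assms by simp

lemma rot_conj_pd: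
  fixes x y u v :: real
  assumes "x^2 + y^2 = 1" "0 < u" "0 < v"
  shows "0 < x^2 * u + y^2 * v" "(x * y * (u - v))^2 < (x^2 * u + y^2 * v) * (y^2 * u + x^2 * v)"
proof -
  have "(x^2 * u + y^2 * v) * (y^2 * u + x^2 * v) - (x * y * (u - v))^2 = u * v * (x^2 + y^2)^2"
    by (simp add: power2_eq_square algebra_simps)
  moreover have "0 < u * v" using assms by simp
  ultimately show "(x * y * (u - v))^2 < (x^2 * u + y^2 * v) * (y^2 * u + x^2 * v)" using assms(1) by simp
  show "0 < x^2 * u + y^2 * v"
  proof (cases "x = 0")
    case True then show ?thesis using assms by simp
  next
    case False then have "0 < x^2 * u" using assms by simp
    moreover have "0 \<le> y^2 * v" using assms by simp
    ultimately show ?thesis by simp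
  qed
qed

lemma pos_of_prod_sum: fixes x y :: real assumes "0 < x * y" "0 < x + y" shows "0 < x"
proof (rule ccontr)
  assume "\<not> 0 < x" then have x: "x \<le> 0" by simp
  then have "0 < y" using assms(2) by simp
  then have "x * y \<le> 0" using x by (simp add: mult_nonpos_nonneg)
  then show False using assms(1) by simp
qed

lemma mix_det:
  fixes a s cc Q z :: real
  assumes h1: "cc^2 + s^2 = 1" and h2: "Q * z = 1"
  shows "((1-a)*Q + a*(cc^2*Q + s^2*z)) * ((1-a)*z + a*(s^2*Q + cc^2*z)) - (a*(cc*s*(Q - z)))^2
         = 1 + a*(1-a)*s^2*(Q - z)^2"
proof -
  have e1: "((1-a)*Q + a*(cc^2*Q + s^2*z)) * ((1-a)*z + a*(s^2*Q + cc^2*z)) - (a*(cc*s*(Q - z)))^2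
      = (1-a)^2*(Q*z) + a*(1-a)*(s^2*(Q^2+z^2) + 2*cc^2*(Q*z)) + a^2*(Q*z)*(cc^2+s^2)^2"
    by (simp add: algebra_simps power2_eq_square)
  have e2: "1 + a*(1-a)*s^2*(Q - z)^2 = 1 + a*(1-a)*s^2*(Q^2+z^2-2*(Q*z))"
    by (simp add: algebra_simps power2_eq_square)
  have c2: "cc^2 = 1 - s^2" using h1 by simp
  have f1: "(1-a)^2*(Q*z) + a*(1-a)*(s^2*(Q^2+z^2) + 2*cc^2*(Q*z)) + a^2*(Q*z)*(cc^2+s^2)^2
     = (1-a)^2*1 + a*(1-a)*(s^2*(Q^2+z^2) + 2*(1-s^2)*1) + a^2*1*1^2"
    by (simp only: h1 h2) (simp only: c2)
  have f2: "1 + a*(1-a)*s^2*(Q^2+z^2-2*(Q*z)) = 1 + a*(1-a)*s^2*(Q^2+z^2-2*1)" by (simp only: h2)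
  have f3: "(1-a)^2*1 + a*(1-a)*(s^2*(Q^2+z^2) + 2*(1-s^2)*1) + a^2*1*1^2 = 1 + a*(1-a)*s^2*(Q^2+z^2-2*1)"
    by (simp add: algebra_simps power2_eq_square)
  show ?thesis unfolding e1 e2 f1 f2 f3 ..
qed
lemma M_det:
  fixes s cc N z :: real
  assumes h1: "cc^2 + s^2 = 1" and h2: "N * z = 1"
  shows "(cc^2 + s^2 * z^2) * (s^2*N^2 + cc^2) - (cc*s*(N - z))^2 = 1"
proof -
  have e1: "(cc^2 + s^2 * z^2) * (s^2*N^2 + cc^2) - (cc*s*(N - z))^2 = (cc^2)^2 + (s^2)^2*(N*z)^2 + 2*cc^2*s^2*(N*z)"
    by (simp add: algebra_simps power2_eq_square)
  have e3: "(cc^2)^2 + (s^2)^2 + 2*cc^2*s^2 = (cc^2+s^2)^2" by (simp add: algebra_simps power2_eq_square)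
  show ?thesis unfolding e1 h2 using e3 h1 by simp
qed


definition LL :: real where "LL = 3 + 2 * sqrt 2"
definition H0 :: "real \<Rightarrow> real" where
  "H0 al = (LL powr al - (1/LL) powr al) / (LL - 1/LL) * (1 - LL) + LL powr al"

lemma construction:
  fixes al p q N :: real
  assumes al: "0 < al" "al < 1" and pq: "0 < q" "q < p" and N3: "3 \<le> N"
  defines "s \<equiv> 2 * N / (N^2 - 1)"
  defines "cc \<equiv> sqrt (1 - s^2)"
  defines "P \<equiv> N powr (1/p)"
  defines "Q \<equiv> N powr (q/p)"
  defines "A \<equiv> sym2 P 0 (1/P)"
  defines "B \<equiv> rot cc s * rdiag 2 (dg P (1/P)) * cadj (rot cc s)"
  shows "posdef 2 A \<and> posdef 2 B \<and>
    (\<exists>g1 g2 m1 m2. eigs 2 (G_ap 2 al p A B) = [g1 powr (1/p), g2 powr (1/p)] \<and> g1 * g2 = 1 \<and>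
        g1 + g2 = H0 al * (N + 1/N) \<and> 0 < g2 \<and> g2 \<le> g1 \<and>
        eigs 2 (A_aq 2 al q A B) = [m1 powr (1/q), m2 powr (1/q)] \<and> 0 < m2 \<and>
        m2 \<le> (1 + s^2 * Q^2) / ((1 - s^2) * Q))"
proof -
  have p0: "0 < p" using pq by simp
  have N0: "0 < N" using N3 by simp
  have "4 \<le> (N-1)^2" using power_mono[of 2 "N-1" 2] N3 by simp
  moreover have "(N-1)^2 = N^2 - 2*N + 1" by (simp add: power2_eq_square algebra_simps)
  ultimately have N2: "2 * N < N^2 - 1" by simp
  then have N21: "0 < N^2 - 1" using N0 by simp
  have s0: "0 < s" unfolding s_def using N21 N0 by simp
  have s1: "s < 1" unfolding s_def using N21 N2 by simp
  have sN: "s * (N - 1/N) = 2" unfolding s_def using N21 N0 by (simp add: field_simps power2_eq_square)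
  have c2: "cc^2 = 1 - s^2" unfolding cc_def using s0 s1 by (simp add: abs_square_less_1 less_imp_le)
  have cs1: "cc^2 + s^2 = 1" using c2 by simp
  have P0: "0 < P" unfolding P_def using N0 by simp
  have Pp: "P powr p = N" unfolding P_def using N0 p0 by (simp add: powr_powr)
  have Pp': "(1/P) powr p = 1/N" using Pp P0 by (simp add: powr_divide)
  have Pq: "P powr q = Q" unfolding P_def Q_def using N0 p0 by (simp add: powr_powr)
  have Pq': "(1/P) powr q = 1/Q" using Pq P0 by (simp add: powr_divide)
  have Q1: "1 \<le> Q" unfolding Q_def using N3 pq by (simp add: ge_one_powr_ge_zero)
  have pdA: "posdef 2 A" unfolding A_def by (rule posdef_sym2) (use P0 in auto)
  have Bs: "B = sym2 (cc^2 * P + s^2 * (1/P)) (cc * s * (P - 1/P)) (s^2 * P + cc^2 * (1/P))"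
    unfolding B_def rot_conj ..
  have pdB: "posdef 2 B" unfolding Bs
    using rot_conj_pd[OF cs1 P0, of "1/P"] P0 by (intro posdef_sym2) auto
  have Ap: "mpow 2 A p = sym2 N 0 (1/N)" unfolding A_def using mpow_diag[of P "1/P" p] P0 Pp Pp' by simp
  have Aq: "mpow 2 A q = sym2 Q 0 (1/Q)" unfolding A_def using mpow_diag[of P "1/P" q] P0 Pq Pq' by simp
  have Bp: "mpow 2 B p = sym2 (cc^2 * N + s^2 * (1/N)) (cc * s * (N - 1/N)) (s^2 * N + cc^2 * (1/N))"
    unfolding B_def using mpow_rotconj[OF cs1 P0, of "1/P" p] P0 Pp Pp' by simp
  have Bq: "mpow 2 B q = sym2 (cc^2 * Q + s^2 * (1/Q)) (cc * s * (Q - 1/Q)) (s^2 * Q + cc^2 * (1/Q))"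
    unfolding B_def using mpow_rotconj[OF cs1 P0, of "1/P" q] P0 Pq Pq' by simp
  define h where "h = sqrt N"
  have h0: "0 < h" unfolding h_def using N0 by simp
  have hh: "h * h = N" unfolding h_def using N0 by simp
  have e1: "N powr (1/2) = h" unfolding h_def using N0 by (simp add: powr_half_sqrt)
  have e2: "(1/N) powr (1/2) = 1/h" unfolding h_def using N0 by (simp add: powr_half_sqrt real_sqrt_divide)
  have X1: "mpow 2 (sym2 N 0 (1/N)) (1/2) = sym2 h 0 (1/h)"
    using mpow_diag[of N "1/N" "1/2"] N0 e1 e2 by simp
  have X2: "mpow 2 (sym2 N 0 (1/N)) (-1/2) = sym2 (1/h) 0 h"
  proof -
    have e: "(-1/2::real) = - (1/2)" by simp
    have e3: "N powr (-1/2) = 1/h" unfolding e powr_minus e1 by (simp add: inverse_eq_divide)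
    have e4: "(1/N) powr (-1/2) = h" unfolding e powr_minus e2 by simp
    show ?thesis using mpow_diag[of N "1/N" "-1/2"] N0 e3 e4 by simp
  qed
  define z where "z = 1 / N"
  have Nz: "N * z = 1" unfolding z_def using N0 by simp
  have hz: "1/h * (1/h) = z" unfolding z_def using hh by simp
  define aM where "aM = cc^2 + s^2 * z^2"
  define bM where "bM = cc * s * (N - z)"
  define cM where "cM = s^2 * N^2 + cc^2"
  have M: "sym2 (1/h) 0 h * mpow 2 B p * sym2 (1/h) 0 h = sym2 aM bM cM"
  proof -
    have "1/h * (1/h) * (cc^2 * N + s^2 * (1/N)) = cc^2 * (N * z) + s^2 * z^2" unfolding hz z_def[symmetric]
      by (simp add: algebra_simps power2_eq_square)
    then have "1/h * (1/h) * (cc^2 * N + s^2 * (1/N)) = aM" unfolding aM_def Nz by simp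
    moreover have "1/h * h * (cc * s * (N - 1/N)) = bM" unfolding bM_def z_def using h0 by simp
    moreover have "h * h * (s^2 * N + cc^2 * (1/N)) = s^2 * N^2 + cc^2 * (N * z)" unfolding hh z_def[symmetric]
      by (simp add: algebra_simps power2_eq_square)
    then have "h * h * (s^2 * N + cc^2 * (1/N)) = cM" unfolding cM_def Nz by simp
    ultimately show ?thesis unfolding Bp sym2_mult_diag by simp
  qed
  have "0 < s^2 * z^2" using s0 N0 unfolding z_def by simp
  then have aM0: "0 < aM" unfolding aM_def by (simp add: add_nonneg_pos)
  have Mdet: "aM * cM - bM^2 = 1" unfolding aM_def bM_def cM_def by (rule M_det[OF cs1 Nz])
  have Mpd: "bM^2 < aM * cM" using Mdet by simp
  have Mtr: "aM + cM = 6"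
  proof -
    have "s^2 * (N - z)^2 = (s * (N - z))^2" by (simp add: power_mult_distrib)
    also have "\<dots> = 4" using sN unfolding z_def by simp
    finally have "s^2 * (N - z)^2 = 4" .
    moreover have "aM + cM = 2 * cc^2 + s^2 * (N^2 + z^2)"
      unfolding aM_def cM_def by (simp add: algebra_simps power2_eq_square)
    moreover have "(N - z)^2 = N^2 + z^2 - 2 * (N * z)" by (simp add: algebra_simps power2_eq_square)
    ultimately have "aM + cM = 2 * cc^2 + 2 * s^2 + 4" using Nz by (simp add: algebra_simps)
    then show ?thesis using cs1 by simp
  qed
  define l1 where "l1 = ev1 aM bM cM"
  define l2 where "l2 = ev2 aM bM cM"
  note evM = ev_props[OF aM0 Mpd, folded l1_def l2_def]
  have l12: "l1 + l2 = 6" "l1 * l2 = 1" using evM Mtr Mdet by simp_all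
  obtain \<beta> \<gamma> where Mal: "mpow 2 (sym2 aM bM cM) al = sym2 (\<beta> * aM + \<gamma>) (\<beta> * bM) (\<beta> * cM + \<gamma>)"
    and bg1: "l1 powr al = \<beta> * l1 + \<gamma>" and bg2: "l2 powr al = \<beta> * l2 + \<gamma>"
    using sym2_mpow_interp[OF aM0 Mpd, of al] unfolding l1_def[symmetric] l2_def[symmetric] by blast
  define x where "x = \<beta> * aM + \<gamma>"
  define y where "y = \<beta> * cM + \<gamma>"
  have G0: "gmean 2 al (mpow 2 A p) (mpow 2 B p) = sym2 (N * x) (\<beta> * bM) (z * y)"
  proof -
    have "gmean 2 al (mpow 2 A p) (mpow 2 B p) = sym2 h 0 (1/h) * sym2 x (\<beta> * bM) y * sym2 h 0 (1/h)"
      unfolding gmean_def Ap X1 X2 M Mal x_def y_def ..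
    also have "\<dots> = sym2 (N * x) (\<beta> * bM) (z * y)" unfolding sym2_mult_diag hh hz using h0 by simp
    finally show ?thesis .
  qed
  have xy_sum: "x + y = l1 powr al + l2 powr al" unfolding x_def y_def bg1 bg2
    using l12(1) Mtr by (simp add: algebra_simps) (metis distrib_left)
  have Dxy: "x * y - (\<beta> * bM)^2 = 1"
  proof -
    have "x * y - (\<beta> * bM)^2 = \<beta>^2 * (aM * cM - bM^2) + \<beta> * \<gamma> * (aM + cM) + \<gamma>^2"
      unfolding x_def y_def by (simp add: algebra_simps power2_eq_square)
    also have "\<dots> = \<beta>^2 * (l1 * l2) + \<beta> * \<gamma> * (l1 + l2) + \<gamma>^2" unfolding Mdet Mtr l12 by simp
    also have "\<dots> = (\<beta> * l1 + \<gamma>) * (\<beta> * l2 + \<gamma>)" by (simp add: algebra_simps power2_eq_square)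
    also have "\<dots> = l1 powr al * l2 powr al" unfolding bg1 bg2 ..
    also have "\<dots> = (l1 * l2) powr al" by (rule powr_mult[symmetric])
    also have "\<dots> = 1" using l12 by simp
    finally show ?thesis .
  qed
  have x0: "0 < x"
  proof (rule pos_of_prod_sum)
    show "0 < x * y" using Dxy zero_le_power2[of "\<beta> * bM"] by linarith
    have "0 < l2" "0 < l1" using evM by auto
    then have "0 < l1 powr al" "0 < l2 powr al" by auto
    then show "0 < x + y" unfolding xy_sum by (rule add_pos_pos)
  qed
  have ga0: "0 < N * x" using x0 N0 by simp
  have eqG: "(N * x) * (z * y) = (N * z) * (x * y)" by (simp add: algebra_simps)
  have Gdet: "(N * x) * (z * y) - (\<beta> * bM)^2 = 1" unfolding eqG Nz using Dxy by simp
  have Gpd: "(\<beta> * bM)^2 < (N * x) * (z * y)" using Gdet by simp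
  have Gtr: "N * x + z * y = (\<beta> + \<gamma>) * (N + z)"
  proof -
    have "N * x + z * y = \<beta> * (N * aM + z * cM) + \<gamma> * (N + z)" unfolding x_def y_def by (simp add: algebra_simps)
    moreover have "N * aM + z * cM = (cc^2 + s^2) * (N + z) + s^2 * z * (N * z - 1) + s^2 * N * (N * z - 1) + cc^2 * (N * z - 1) * 0"
      unfolding aM_def cM_def by (simp add: algebra_simps power2_eq_square)
    ultimately show ?thesis using cs1 Nz by (simp add: distrib_right)
  qed
  have l1L: "l1 = LL"
  proof -
    have "l2 = 6 - l1" using l12(1) by simp
    then have e6: "l1 * (6 - l1) = 1" using l12(2) by simp
    have "(l1 - 3)^2 = 9 - l1 * (6 - l1)" by (simp add: algebra_simps power2_eq_square)
    then have "(l1 - 3)^2 = 8" unfolding e6 by simp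
    moreover have "0 \<le> l1 - 3" using evM l12 by simp
    ultimately have "l1 - 3 = sqrt 8" by (metis real_sqrt_unique)
    moreover have "sqrt 8 = 2 * sqrt 2" by (metis real_sqrt_mult real_sqrt_four mult_numeral_1 numeral_times_numeral semiring_norm(12) semiring_norm(13) mult.commute)
    ultimately show ?thesis unfolding LL_def by simp
  qed
  have l2L: "l2 = 1 / LL" using l12(2) l1L evM by (simp add: field_simps)
  have LL1: "1 < LL" using real_sqrt_ge_zero[of 2] unfolding LL_def by linarith
  have H: "\<beta> + \<gamma> = H0 al"
  proof -
    have "\<beta> * (LL - 1/LL) = LL powr al - (1/LL) powr al" using bg1 bg2 unfolding l1L l2L by (simp add: algebra_simps)
    note bd = this
    have "1/LL < 1" using LL1 by simp
    then have ne: "LL - 1/LL \<noteq> 0" using LL1 by linarith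
    have "\<beta> = \<beta> * (LL - 1/LL) / (LL - 1/LL)" using ne by simp
    also have "\<dots> = (LL powr al - (1/LL) powr al) / (LL - 1/LL)" unfolding bd ..
    finally have b: "\<beta> = (LL powr al - (1/LL) powr al) / (LL - 1/LL)" .
    have g: "\<gamma> = LL powr al - \<beta> * LL" using bg1 unfolding l1L by simp
    show ?thesis unfolding H0_def g b[symmetric] by (simp add: algebra_simps)
  qed
  have GAP: "G_ap 2 al p A B = mpow 2 (sym2 (N * x) (\<beta> * bM) (z * y)) (1/p)"
    unfolding G_ap_def G0 ..
  define g1 where "g1 = ev1 (N * x) (\<beta> * bM) (z * y)"
  define g2 where "g2 = ev2 (N * x) (\<beta> * bM) (z * y)"
  note evG = ev_props[OF ga0 Gpd, folded g1_def g2_def]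
  have eigG: "eigs 2 (G_ap 2 al p A B) = [g1 powr (1/p), g2 powr (1/p)]"
    unfolding GAP g1_def g2_def by (rule sym2_eigs_pow[OF ga0 Gpd]) (use p0 in simp)
  have g12: "g1 * g2 = 1" "g1 + g2 = H0 al * (N + 1/N)" using evG Gdet Gtr H unfolding z_def by simp_all
  define w where "w = 1 / Q"
  have Q0: "0 < Q" using Q1 by simp
  have Qw: "Q * w = 1" unfolding w_def using Q0 by simp
  define ma where "ma = (1-al)*Q + al*(cc^2*Q + s^2*w)"
  define mb where "mb = al*(cc*s*(Q - w))"
  define mc where "mc = (1-al)*w + al*(s^2*Q + cc^2*w)"
  have Mix: "complex_of_real (1 - al) \<cdot>\<^sub>m mpow 2 A q + complex_of_real al \<cdot>\<^sub>m mpow 2 B q = sym2 ma mb mc"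
    unfolding Aq Bq sym2_scale_add ma_def mb_def mc_def w_def by simp
  have AAQ: "A_aq 2 al q A B = mpow 2 (sym2 ma mb mc) (1/q)" unfolding A_aq_def Mix ..
  have mdet: "ma * mc - mb^2 = 1 + al*(1-al)*s^2*(Q - w)^2" unfolding ma_def mb_def mc_def by (rule mix_det[OF cs1 Qw])
  have w0: "0 < w" unfolding w_def using Q0 by simp
  have ma0: "0 < ma"
  proof -
    have "0 < (1-al)*Q" using al Q0 by simp
    moreover have "0 \<le> al*(cc^2*Q + s^2*w)" using al Q0 w0 by simp
    ultimately show ?thesis unfolding ma_def by simp
  qed
  have mdet1: "1 \<le> ma * mc - mb^2" unfolding mdet using al by simp
  have mpd: "mb^2 < ma * mc" using mdet1 by simp
  define m1 where "m1 = ev1 ma mb mc"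
  define m2 where "m2 = ev2 ma mb mc"
  note evX = ev_props[OF ma0 mpd, folded m1_def m2_def]
  have eigA: "eigs 2 (A_aq 2 al q A B) = [m1 powr (1/q), m2 powr (1/q)]"
    unfolding AAQ m1_def m2_def by (rule sym2_eigs_pow[OF ma0 mpd]) (use pq in simp)
  have m1ma: "ma \<le> m1"
  proof (rule ccontr)
    assume "\<not> ma \<le> m1"
    then have "m1 < ma" by simp
    then have "0 < (ma - m1) * (ma - m2)" using evX by (simp add: mult_pos_pos)
    moreover have "(ma - m1) * (ma - m2) = ma * ma - ma * (m1 + m2) + m1 * m2" by (simp add: algebra_simps)
    ultimately show False using evX by (simp add: algebra_simps power2_eq_square)
  qed
  have m2le: "m2 \<le> (ma * mc - mb^2) / ma"
  proof -
    have "m2 * m1 = ma * mc - mb^2" using evX by (simp add: mult.commute)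
    moreover have "m2 * ma \<le> m2 * m1" using m1ma evX by (simp add: mult_left_mono)
    ultimately have "m2 * ma \<le> ma * mc - mb^2" by simp
    then show ?thesis using ma0 by (simp add: le_divide_eq)
  qed
  have dle: "ma * mc - mb^2 \<le> 1 + s^2 * Q^2"
  proof -
    have "w \<le> 1" unfolding w_def using Q1 by simp
    then have "0 \<le> Q - w" "Q - w \<le> Q" using Q1 w0 by linarith+
    then have "(Q - w)^2 \<le> Q^2" by (simp add: power_mono)
    moreover have "al * (1 - al) \<le> 1"
      by (rule mult_le_one) (use al in auto)
    ultimately have "al*(1-al)*(s^2*(Q - w)^2) \<le> 1 * (s^2 * Q^2)"
      using al by (intro mult_mono) (auto intro: mult_left_mono)
    then show ?thesis unfolding mdet by (simp add: algebra_simps)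
  qed
  have male: "(1 - s^2) * Q \<le> ma"
  proof -
    have "ma = Q - al * s^2 * Q + al * s^2 * w" unfolding ma_def c2 by (simp add: algebra_simps)
    moreover have "al * s^2 * Q \<le> s^2 * Q" using mult_left_le_one_le[of "s^2*Q" al] al Q0 by (simp add: mult.assoc)
    moreover have "0 \<le> al * s^2 * w" using al w0 by simp
    ultimately show ?thesis by (simp add: algebra_simps)
  qed
  have m2b: "m2 \<le> (1 + s^2 * Q^2) / ((1 - s^2) * Q)"
  proof -
    have "0 < (1 - s^2) * Q" using s0 s1 Q0 by (simp add: abs_square_less_1)
    have "(ma * mc - mb^2) / ma \<le> (1 + s^2 * Q^2) / ma" using dle ma0 by (simp add: divide_right_mono)
    also have "\<dots> \<le> (1 + s^2 * Q^2) / ((1 - s^2) * Q)"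
      using male \<open>0 < (1 - s^2) * Q\<close> by (intro divide_left_mono) (auto intro: add_pos_nonneg)
    finally show ?thesis using m2le by simp
  qed
  show ?thesis
    using pdA pdB eigG g12 evG eigA evX m2b by blast
qed


lemma H0_bounds:
  fixes al :: real
  assumes al: "0 < al" "al < 1"
  shows "0 < H0 al" "H0 al < 1"
proof -
  have LL1: "1 < LL" using real_sqrt_ge_zero[of 2] unfolding LL_def by linarith
  define u where "u = LL powr al"
  have u1: "1 < u" unfolding u_def using powr_less_mono2[of al 1 LL] al LL1 by simp
  have uL: "u < LL" unfolding u_def using powr_less_mono[of al 1 LL] al LL1 by simp
  have v: "(1/LL) powr al = 1/u" unfolding u_def using LL1 by (simp add: powr_divide)
  have d: "LL - 1/LL = (LL - 1) * (LL + 1) / LL" using LL1 by (simp add: field_simps)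
  have "1 < LL * LL" using LL1 mult_strict_mono[of 1 LL 1 LL] by simp
  then have ne1: "LL - 1 \<noteq> 0" "LL + 1 \<noteq> 0" "LL \<noteq> 0" "LL * LL - 1 \<noteq> 0" using LL1 by auto
  have key: "a / ((LL - 1) * (LL + 1) / LL) * (1 - LL) = - (a * LL / (LL + 1))" for a
    using ne1 by (simp add: field_simps)
  have key2: "u - (u - b) * LL / (LL + 1) = (u + LL * b) / (LL + 1)" for b
    using ne1 by (simp add: field_simps)
  have "H0 al = u - (u - 1/u) * LL / (LL + 1)"
    unfolding H0_def v d u_def[symmetric] key by simp
  also have "\<dots> = (u + LL / u) / (LL + 1)" unfolding key2 by simp
  finally have H: "H0 al = (u + LL / u) / (LL + 1)" .
  have "0 < u + LL / u" using LL1 u1 by (simp add: add_pos_pos)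
  then show "0 < H0 al" unfolding H using LL1 by simp
  have "(u - 1) * (u - LL) < 0" using u1 uL by (simp add: mult_pos_neg)
  then have "u * u + LL < (LL + 1) * u" by (simp add: algebra_simps)
  then have "u + LL / u < LL + 1" using u1 by (simp add: field_simps)
  then show "H0 al < 1" unfolding H using LL1 by simp
qed

lemma final_ineq:
  fixes p q N g1 g2 m2 H F :: real
  assumes pq: "0 < q" "q < p" and N3: "3 \<le> N" and g: "g1 * g2 = 1" "0 < g2" "g2 \<le> g1" "g1 + g2 = H * (N + 1/N)"
    and H: "0 < H" and m: "0 < m2" "m2 \<le> F / N powr (q/p)" and F: "0 < F"
    and lt: "F powr (1/q) * (H * (1 + 1/N^2)) powr (1/p) < 1"
  shows "m2 powr (1/q) < g2 powr (1/p)"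
proof -
  have p0: "0 < p" using pq by simp
  have N0: "0 < N" using N3 by simp
  have g1p: "0 < g1" using g by simp
  have T: "H * (N + 1/N) = (H * (1 + 1/N^2)) * N" using N0 by (simp add: algebra_simps power2_eq_square)
  have "1 / (g1 + g2) \<le> 1 / g1" using g g1p by (simp add: frac_le)
  also have "1 / g1 = g2" using g g1p by (simp add: field_simps)
  finally have g2lb: "1 / ((H * (1 + 1/N^2)) * N) \<le> g2" unfolding g T .
  define K where "K = (H * (1 + 1/N^2)) powr (1/p)"
  define n where "n = N powr (1/p)"
  have pN: "0 < 1 + 1/N^2" using N0 by (simp add: add_pos_nonneg)
  have K0: "0 < K" unfolding K_def using H N0 pN by simp
  have n0: "0 < n" unfolding n_def using N0 by simp
  have pos: "0 < (H * (1 + 1/N^2)) * N" using H N0 pN by simp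
  have "(1 / ((H * (1 + 1/N^2)) * N)) powr (1/p) \<le> g2 powr (1/p)"
    using g2lb pos p0 by (intro powr_mono2) auto
  moreover have "(1 / ((H * (1 + 1/N^2)) * N)) powr (1/p) = 1 / (K * n)"
    unfolding K_def n_def using pos H N0 pN by (simp add: powr_divide powr_mult)
  ultimately have lb: "1 / (K * n) \<le> g2 powr (1/p)" by simp
  have "m2 powr (1/q) \<le> (F / N powr (q/p)) powr (1/q)" using m pq by (intro powr_mono2) auto
  also have "\<dots> = F powr (1/q) / n"
    unfolding n_def using F N0 pq by (simp add: powr_divide powr_powr)
  finally have ub: "m2 powr (1/q) \<le> F powr (1/q) / n" .
  have "F powr (1/q) * K < 1" using lt unfolding K_def .
  then have "F powr (1/q) / n < 1 / (K * n)" using K0 n0 by (simp add: field_simps)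
  then show ?thesis using lb ub by linarith
qed
lemma exists_N:
  fixes H p q :: real
  assumes H: "0 < H" "H < 1" and pq: "0 < q" "q < p"
  shows "\<exists>N\<ge>3. ((1 + (2*N/(N^2-1))^2 * (N powr (q/p))^2) / (1 - (2*N/(N^2-1))^2)) powr (1/q)
              * (H * (1 + 1/N^2)) powr (1/p) < 1"
proof -
  define r where "r = q / p"
  have r: "0 < r" "r < 1" unfolding r_def using pq by auto
  have t1: "((\<lambda>N::real. (1 + (2*N/(N^2-1))^2 * (N powr r)^2) / (1 - (2*N/(N^2-1))^2)) \<longlongrightarrow> 1) at_top"
    using r by real_asymp
  have t2: "((\<lambda>N::real. H * (1 + 1/N^2)) \<longlongrightarrow> H) at_top" by real_asymp
  have t3: "((\<lambda>N::real. ((1 + (2*N/(N^2-1))^2 * (N powr r)^2) / (1 - (2*N/(N^2-1))^2)) powr (1/q)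
              * (H * (1 + 1/N^2)) powr (1/p)) \<longlongrightarrow> 1 powr (1/q) * H powr (1/p)) at_top"
    by (intro tendsto_mult tendsto_powr t1 t2 tendsto_const) (use H in auto)
  have lt: "1 powr (1/q) * H powr (1/p) < 1"
    using powr_less_mono2[of "1/p" H 1] H pq by simp
  have ev: "eventually (\<lambda>N::real. ((1 + (2*N/(N^2-1))^2 * (N powr r)^2) / (1 - (2*N/(N^2-1))^2)) powr (1/q)
              * (H * (1 + 1/N^2)) powr (1/p) < 1 \<and> 3 \<le> N) at_top"
    using order_tendstoD(2)[OF t3 lt] eventually_ge_at_top[of 3] by (rule eventually_conj)
  then obtain N where "3 \<le> N" "((1 + (2*N/(N^2-1))^2 * (N powr r)^2) / (1 - (2*N/(N^2-1))^2)) powr (1/q)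
              * (H * (1 + 1/N^2)) powr (1/p) < 1"
    unfolding eventually_at_top_linorder by auto
  then show ?thesis unfolding r_def by blast
qed

theorem theorem4p20:
  fixes \<alpha> p q :: real
  assumes "0 < \<alpha>" and "\<alpha> < 1" and "0 < p" and "0 < q"
    and "\<forall>A B. posdef 2 A \<longrightarrow> posdef 2 B \<longrightarrow> eig_le 2 (G_ap 2 \<alpha> p A B) (A_aq 2 \<alpha> q A B)"
  shows "p \<le> q"
proof (rule ccontr)
  assume "\<not> p \<le> q"
  then have qp: "q < p" by simp
  note Hb = H0_bounds[OF assms(1,2)]
  obtain N where N3: "3 \<le> N" and lt: "((1 + (2*N/(N^2-1))^2 * (N powr (q/p))^2) / (1 - (2*N/(N^2-1))^2)) powr (1/q)
              * (H0 \<alpha> * (1 + 1/N^2)) powr (1/p) < 1"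
    using exists_N[OF Hb assms(4) qp] by blast
  let ?s = "2 * N / (N^2 - 1)"
  let ?cc = "sqrt (1 - ?s^2)"
  let ?P = "N powr (1/p)"
  let ?Q = "N powr (q/p)"
  let ?A = "sym2 ?P 0 (1/?P)"
  let ?B = "rot ?cc ?s * rdiag 2 (dg ?P (1/?P)) * cadj (rot ?cc ?s)"
  have C: "posdef 2 ?A \<and> posdef 2 ?B \<and>
    (\<exists>g1 g2 m1 m2. eigs 2 (G_ap 2 \<alpha> p ?A ?B) = [g1 powr (1/p), g2 powr (1/p)] \<and> g1 * g2 = 1 \<and>
        g1 + g2 = H0 \<alpha> * (N + 1/N) \<and> 0 < g2 \<and> g2 \<le> g1 \<and>
        eigs 2 (A_aq 2 \<alpha> q ?A ?B) = [m1 powr (1/q), m2 powr (1/q)] \<and> 0 < m2 \<and>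
        m2 \<le> (1 + ?s^2 * ?Q^2) / ((1 - ?s^2) * ?Q))"
    by (rule construction[OF assms(1,2) assms(4) qp N3])
  then obtain g1 g2 m1 m2 where pdA: "posdef 2 ?A" and pdB: "posdef 2 ?B"
    and eG: "eigs 2 (G_ap 2 \<alpha> p ?A ?B) = [g1 powr (1/p), g2 powr (1/p)]" and g: "g1 * g2 = 1"
        "g1 + g2 = H0 \<alpha> * (N + 1/N)" "0 < g2" "g2 \<le> g1"
    and eA: "eigs 2 (A_aq 2 \<alpha> q ?A ?B) = [m1 powr (1/q), m2 powr (1/q)]" and m: "0 < m2"
    and mb: "m2 \<le> (1 + ?s^2 * ?Q^2) / ((1 - ?s^2) * ?Q)"
    by blast
  have "eig_le 2 (G_ap 2 \<alpha> p ?A ?B) (A_aq 2 \<alpha> q ?A ?B)" using assms(5) pdA pdB by blast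
  then have le: "g2 powr (1/p) \<le> m2 powr (1/q)" unfolding eig_le_def eG eA by (metis less2 nth_Cons_0 nth_Cons_Suc One_nat_def)
  have N0: "0 < N" using N3 by simp
  have "4 \<le> (N-1)^2" using power_mono[of 2 "N-1" 2] N3 by simp
  moreover have "(N-1)^2 = N^2 - 2*N + 1" by (simp add: power2_eq_square algebra_simps)
  ultimately have N2: "2 * N < N^2 - 1" by simp
  then have N21: "0 < N^2 - 1" using N0 by simp
  have s0: "0 < ?s" using N21 N0 by simp
  have s1: "?s < 1" using N21 N2 by simp
  have "?s * ?s < 1 * 1" using s0 s1 by (intro mult_strict_mono) auto
  then have s2: "?s^2 < 1" by (simp only: power2_eq_square)
  have F0: "0 < (1 + ?s^2 * ?Q^2) / (1 - ?s^2)" using s2 by (simp add: add_pos_nonneg)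
  have mb': "m2 \<le> ((1 + ?s^2 * ?Q^2) / (1 - ?s^2)) / ?Q" using mb by (simp add: divide_divide_eq_left)
  have "m2 powr (1/q) < g2 powr (1/p)"
    by (rule final_ineq[OF assms(4) qp N3 g(1,3,4,2) Hb(1) m mb' F0 lt])
  then show False using le by simp
qed

end
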